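(* Let $m>n\ge1$ be coprime integers, and let $$\mathcal{A}_{\frac{m}{n}}(q)=q\,\mathcal{N}_{\frac{m}{n}}(q)\mathcal{N}_{\frac{n}{m}}(q)+\mathcal{D}_{\frac{m}{n}}(q)\mathcal{D}_{\frac{n}{m}}(q),$$ $$\mathcal{B}_{\frac{m}{n}}(q)=\mathcal{N}_{\frac{m}{n}}(q)\mathcal{D}_{\frac{n}{m}}(q)-\mathcal{D}_{\frac{m}{n}}(q)\mathcal{N}_{\frac{n}{m}}(q),$$ $$\mathcal{C}_{\frac{m}{n}}(q)=q\,\mathcal{N}_{\frac{m}{n}}(q)^2+\mathcal{D}_{\frac{m}{n}}(q)^2.$$ Then (i) $\mathcal{A}_{\frac{m}{n}}$ and $\mathcal{B}_{\frac{m}{n}}$ are self-reciprocal, i.e. $q^{\deg P}P(q^{-1})=P(q)$ for $P\in\{\mathcal{A}_{\frac{m}{n}},\mathcal{B}_{\frac{m}{n}}\}$; (ii) $\mathcal{A}_{\frac{m}{n}},\mathcal{B}_{\frac{m}{n}},\mathcal{C}_{\frac{m}{n}}$ are monic (leading and lowest-degree coefficients equal to $1$) and have positive coefficients.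
   Context: The $q$-deformed rationals: $x\mapsto[x]_q$ is the unique map from $\mathbb{Q}\cup\{\infty\}$ to $\mathbb{Q}(q)\cup\{\infty\}$ satisfying $[0]_q=0$, $[x+1]_q=q[x]_q+1$ and $[-1/x]_q=-1/(q[x]_q)$. For positive rational $x$, $\mathcal{N}_x,\mathcal{D}_x\in\mathbb{Z}[q]$ are the numerator and denominator of $[x]_q$: the polynomials with no common divisor in $\mathbb{Z}[q]$ other than $\pm1$ and with positive leading coefficients such that $[x]_q=\mathcal{N}_x/\mathcal{D}_x$. *)

theory Defs
  imports "HOL-Computational_Algebra.Polynomial" "HOL-Computational_Algebra.Fraction_Field"
    Complex_Main
begin

text \<open>Q(q) is the fraction field of Z[q]; the extra point infinity is modelled by None.
  Likewise Q united with infinity is rat option (None = infinity).\<close>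

type_synonym qfun = "int poly fract"

definition qvar :: qfun where "qvar = Fract [:0, 1:] 1"

definition shift1 :: "rat option \<Rightarrow> rat option" where
  "shift1 v = map_option (\<lambda>x. x + 1) v"

definition neginv :: "rat option \<Rightarrow> rat option" where
  "neginv v = (case v of None \<Rightarrow> Some 0
                | Some x \<Rightarrow> if x = 0 then None else Some (- 1 / x))"

definition qshift1 :: "qfun option \<Rightarrow> qfun option" where
  "qshift1 v = map_option (\<lambda>y. qvar * y + 1) v"

definition qneginv :: "qfun option \<Rightarrow> qfun option" where
  "qneginv v = (case v of None \<Rightarrow> Some 0
                 | Some y \<Rightarrow> if y = 0 then None else Some (- 1 / (qvar * y)))"

definition is_qdeformation :: "(rat option \<Rightarrow> qfun option) \<Rightarrow> bool" where
  "is_qdeformation f \<longleftrightarrow>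
     f (Some 0) = Some 0 \<and>
     (\<forall>x. f (shift1 x) = qshift1 (f x)) \<and>
     (\<forall>x. f (neginv x) = qneginv (f x))"

definition qdeform :: "rat option \<Rightarrow> qfun option" where
  "qdeform = (THE f. is_qdeformation f)"

definition qnumden :: "rat \<Rightarrow> int poly \<times> int poly" where
  "qnumden x = (THE (N, D). coprime N D \<and> lead_coeff N > 0 \<and> lead_coeff D > 0 \<and>
                   qdeform (Some x) = Some (Fract N D))"

definition qN :: "rat \<Rightarrow> int poly" where "qN x = fst (qnumden x)"
definition qD :: "rat \<Rightarrow> int poly" where "qD x = snd (qnumden x)"

text \<open>Self-reciprocal: q^(deg P) P(1/q) = P(q) (checked as an identity of functions
  on nonzero complex numbers, equivalent to the identity of rational functions).\<close>
definition self_reciprocal :: "int poly \<Rightarrow> bool" where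
  "self_reciprocal P \<longleftrightarrow>
     (\<forall>z::complex. z \<noteq> 0 \<longrightarrow>
        z ^ degree P * poly (map_poly of_int P) (inverse z) = poly (map_poly of_int P) z)"

definition monic_both :: "int poly \<Rightarrow> bool" where
  "monic_both P \<longleftrightarrow> lead_coeff P = 1 \<and> coeff P (LEAST i. coeff P i \<noteq> 0) = 1"

definition positive_coeffs :: "int poly \<Rightarrow> bool" where
  "positive_coeffs P \<longleftrightarrow> (\<forall>i \<le> degree P. coeff P i > 0)"

definition qA :: "rat \<Rightarrow> int poly" where
  "qA x = [:0, 1:] * qN x * qN (1 / x) + qD x * qD (1 / x)"
definition qB :: "rat \<Rightarrow> int poly" where
  "qB x = qN x * qD (1 / x) - qD x * qN (1 / x)"
definition qC :: "rat \<Rightarrow> int poly" where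
  "qC x = [:0, 1:] * qN x ^ 2 + qD x ^ 2"

end

theory Submission
  imports Defs "HOL-Computational_Algebra.Polynomial_Factorial"
begin
definition ev :: "int poly \<Rightarrow> complex \<Rightarrow> complex" where
  "ev P z = poly (map_poly of_int P) z"

lemma ev_add[simp]: "ev (P + Q) z = ev P z + ev Q z"
proof -
  have "map_poly (of_int::int\<Rightarrow>complex) (P + Q) = map_poly of_int P + map_poly of_int Q"
    by (rule poly_eqI) (simp add: coeff_map_poly)
  then show ?thesis by (simp add: ev_def)
qed

lemma ev_diff[simp]: "ev (P - Q) z = ev P z - ev Q z"
proof -
  have "map_poly (of_int::int\<Rightarrow>complex) (P - Q) = map_poly of_int P - map_poly of_int Q"
    by (rule poly_eqI) (simp add: coeff_map_poly)
  then show ?thesis by (simp add: ev_def)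
qed

lemma ev_mult[simp]: "ev (P * Q) z = ev P z * ev Q z"
proof -
  have "map_poly (of_int::int\<Rightarrow>complex) (P * Q) = map_poly of_int P * map_poly of_int Q"
    by (rule poly_eqI) (simp add: coeff_map_poly coeff_mult)
  then show ?thesis by (simp add: ev_def)
qed

lemma ev_X[simp]: "ev [:0,1:] z = z"
  by (simp add: ev_def map_poly_pCons)

lemma ev_sum: "degree P \<le> k \<Longrightarrow> ev P z = (\<Sum>i\<le>k. of_int (coeff P i) * z ^ i)"
proof -
  assume a: "degree P \<le> k"
  have "ev P z = (\<Sum>i\<le>degree (map_poly (of_int::int\<Rightarrow>complex) P). coeff (map_poly of_int P) i * z ^ i)"
    by (simp add: ev_def poly_altdef)
  also have "\<dots> = (\<Sum>i\<le>k. coeff (map_poly (of_int::int\<Rightarrow>complex) P) i * z ^ i)"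
    apply (rule sum.mono_neutral_left)
    using a by (auto simp: coeff_eq_0 degree_map_poly)
  finally show ?thesis by (simp add: coeff_map_poly)
qed

definition rel :: "nat \<Rightarrow> int poly \<Rightarrow> int poly \<Rightarrow> bool" where
  "rel k P Q \<longleftrightarrow> (\<forall>i. coeff P i = (if i \<le> k then coeff Q (k - i) else 0))"

lemma rel_degree: "rel k P Q \<Longrightarrow> degree P \<le> k"
  unfolding rel_def by (metis (no_types, lifting) degree_le not_le)

lemma rel_ev:
  assumes r: "rel k P Q" and q: "rel k Q P" and z: "z \<noteq> 0"
  shows "ev P z = z ^ k * ev Q (inverse z)"
proof -
  have "ev P z = (\<Sum>i\<le>k. of_int (coeff P i) * z ^ i)" using ev_sum rel_degree[OF r] by blast
  also have "\<dots> = (\<Sum>i\<le>k. of_int (coeff Q (k - i)) * z ^ i)"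
    using r unfolding rel_def by (intro sum.cong) auto
  also have "\<dots> = (\<Sum>j\<le>k. of_int (coeff Q j) * z ^ (k - j))"
    by (rule sum.reindex_bij_witness[where i="\<lambda>i. k - i" and j="\<lambda>i. k - i"]) auto
  also have "\<dots> = (\<Sum>j\<le>k. z ^ k * (of_int (coeff Q j) * inverse z ^ j))"
    using z by (intro sum.cong) (auto simp: power_diff field_simps)
  also have "\<dots> = z ^ k * ev Q (inverse z)"
    using ev_sum[OF rel_degree[OF q]] by (simp add: sum_distrib_left)
  finally show ?thesis .
qed

definition qX :: "int poly" where "qX = [:0,1:]"

lemma coeff_qX: "coeff (qX * p) i = (if i = 0 then 0 else coeff p (i - 1))"
  by (cases i) (auto simp: qX_def)

definition pos_on :: "int poly \<Rightarrow> nat \<Rightarrow> nat \<Rightarrow> bool" where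
  "pos_on P a b \<longleftrightarrow> (\<forall>i. a \<le> i \<and> i \<le> b \<longrightarrow> 0 < coeff P i)"

definition nonneg :: "int poly \<Rightarrow> bool" where
  "nonneg P \<longleftrightarrow> (\<forall>i. 0 \<le> coeff P i)"

definition Inv :: "nat \<Rightarrow> int poly \<Rightarrow> int poly \<Rightarrow> int poly \<Rightarrow> int poly \<Rightarrow> bool" where
  "Inv k N D N' D' \<longleftrightarrow> rel k N' D \<and> rel k D N' \<and> rel k D' N \<and> rel k N D' \<and>
     coeff D 0 = 1 \<and> coeff D' 0 = 1 \<and> pos_on D 0 (degree D) \<and> pos_on D' 0 (degree D') \<and>
     k \<le> degree D + degree D'"

lemma Inv_swap: "Inv k N D N' D' \<Longrightarrow> Inv k N' D' N D"
  unfolding Inv_def by auto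

lemma pos_nonneg: "pos_on P 0 (degree P) \<Longrightarrow> nonneg P"
  unfolding pos_on_def nonneg_def
proof (intro allI)
  fix i assume a: "\<forall>i. 0 \<le> i \<and> i \<le> degree P \<longrightarrow> 0 < coeff P i"
  show "0 \<le> coeff P i"
  proof (cases "i \<le> degree P")
    case True then show ?thesis using a by (simp add: less_imp_le)
  next
    case False then show ?thesis by (simp add: coeff_eq_0)
  qed
qed

lemma rel_nonneg: "rel k P Q \<Longrightarrow> nonneg Q \<Longrightarrow> nonneg P"
  unfolding rel_def nonneg_def by simp

lemma Inv_facts:
  assumes "Inv k N D N' D'"
  shows "nonneg N" "nonneg D" "nonneg N'" "nonneg D'"
    "degree D \<le> k" "degree D' \<le> k" "degree N = k" "degree N' = k"
    "coeff N k = 1" "coeff N' k = 1"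
    "pos_on N (k - degree D') k" "pos_on N' (k - degree D) k"
    "pos_on D 0 (degree D)" "pos_on D' 0 (degree D')" "coeff D 0 = 1" "coeff D' 0 = 1"
    "k \<le> degree D + degree D'"
proof -
  note I = assms[unfolded Inv_def]
  show nD: "nonneg D" "nonneg D'" using I pos_nonneg by auto
  show "nonneg N" "nonneg N'" using I nD rel_nonneg by blast+
  show "degree D \<le> k" "degree D' \<le> k" using I rel_degree by blast+
  have rND'0: "coeff N k = (if k \<le> k then coeff D' (k - k) else 0)" using I rel_def by blast
  have rN'D0: "coeff N' k = (if k \<le> k then coeff D (k - k) else 0)" using I rel_def by blast
  show cN: "coeff N k = 1" "coeff N' k = 1" using I rND'0 rN'D0 by auto
  have "degree N \<le> k" using I rel_degree by blast
  moreover have "k \<le> degree N" using cN by (intro le_degree) simp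
  ultimately show "degree N = k" by simp
  have "degree N' \<le> k" using I rel_degree by blast
  moreover have "k \<le> degree N'" using cN by (intro le_degree) simp
  ultimately show "degree N' = k" by simp
  have rND': "\<And>i. coeff N i = (if i \<le> k then coeff D' (k - i) else 0)" using I rel_def by blast
  have rN'D: "\<And>i. coeff N' i = (if i \<le> k then coeff D (k - i) else 0)" using I rel_def by blast
  show "pos_on N (k - degree D') k"
    unfolding pos_on_def
  proof (intro allI impI)
    fix i assume "k - degree D' \<le> i \<and> i \<le> k"
    then show "0 < coeff N i" using rND'[of i] I unfolding pos_on_def by auto
  qed
  show "pos_on N' (k - degree D) k"
    unfolding pos_on_def
  proof (intro allI impI)
    fix i assume "k - degree D \<le> i \<and> i \<le> k"
    then show "0 < coeff N' i" using rN'D[of i] I unfolding pos_on_def by auto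
  qed
  show "pos_on D 0 (degree D)" "pos_on D' 0 (degree D')" "coeff D 0 = 1" "coeff D' 0 = 1"
    "k \<le> degree D + degree D'" using I by auto
qed

lemma Inv_op1:
  assumes "Inv k N D N' D'"
  shows "Inv (Suc k) (qX * N + D) D (qX * N') (D' + qX * N')"
proof -
  note F = Inv_facts[OF assms]
  note I = assms[unfolded Inv_def]
  have rN'D: "\<And>i. coeff N' i = (if i \<le> k then coeff D (k - i) else 0)" using I rel_def by blast
  have rDN': "\<And>i. coeff D i = (if i \<le> k then coeff N' (k - i) else 0)" using I rel_def by blast
  have rD'N: "\<And>i. coeff D' i = (if i \<le> k then coeff N (k - i) else 0)" using I rel_def by blast
  have rND': "\<And>i. coeff N i = (if i \<le> k then coeff D' (k - i) else 0)" using I rel_def by blast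
  have 1: "rel (Suc k) (qX * N') D"
    unfolding rel_def coeff_qX
    apply (intro allI)
    subgoal for i using rN'D[of "i - 1"] rDN'[of "Suc k"] by (cases i) auto
    done
  have 2: "rel (Suc k) D (qX * N')"
    unfolding rel_def coeff_qX
    apply (intro allI)
    subgoal for i using rDN'[of i] by (auto simp: Suc_diff_le)
    done
  have 3: "rel (Suc k) (D' + qX * N') (qX * N + D)"
    unfolding rel_def coeff_qX coeff_add
  proof (intro allI)
    fix i
    show "coeff D' i + (if i = 0 then 0 else coeff N' (i - 1)) =
      (if i \<le> Suc k then (if Suc k - i = 0 then 0 else coeff N (Suc k - i - 1)) + coeff D (Suc k - i) else 0)"
    proof (cases i)
      case 0
      then show ?thesis using rND'[of k] rDN'[of "Suc k"] by simp
    next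
      case (Suc j)
      have a: "coeff D' (Suc j) = (if Suc j \<le> k then coeff N (k - Suc j) else 0)" using rD'N by blast
      have b: "coeff N' j = (if j \<le> k then coeff D (k - j) else 0)" using rN'D by blast
      show ?thesis unfolding Suc using a b by (auto simp: Suc_diff_le)
    qed
  qed
  have 4: "rel (Suc k) (qX * N + D) (D' + qX * N')"
    unfolding rel_def coeff_qX coeff_add
  proof (intro allI)
    fix i
    show "(if i = 0 then 0 else coeff N (i - 1)) + coeff D i =
      (if i \<le> Suc k then coeff D' (Suc k - i) + (if Suc k - i = 0 then 0 else coeff N' (Suc k - i - 1)) else 0)"
    proof (cases i)
      case 0
      then show ?thesis using rN'D[of k] rD'N[of "Suc k"] by simp
    next
      case (Suc j)
      have a: "coeff N j = (if j \<le> k then coeff D' (k - j) else 0)" using rND' by blast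
      have b: "coeff D (Suc j) = (if Suc j \<le> k then coeff N' (k - Suc j) else 0)" using rDN' by blast
      show ?thesis unfolding Suc using a b by (auto simp: Suc_diff_le)
    qed
  qed
  have c0: "coeff (D' + qX * N') 0 = 1" using F by (simp add: coeff_qX)
  have top: "coeff (D' + qX * N') (Suc k) = 1"
    using F rD'N[of "Suc k"] by (simp add: coeff_qX)
  have hi: "coeff (D' + qX * N') i = 0" if "i > Suc k" for i
    using rD'N[of i] rN'D[of "i - 1"] that by (simp add: coeff_qX)
  have deg: "degree (D' + qX * N') = Suc k"
    using top hi by (metis le_antisym degree_le le_degree not_le zero_neq_one)
  have pos: "pos_on (D' + qX * N') 0 (Suc k)"
    unfolding pos_on_def
  proof (intro allI impI)
    fix i assume i: "0 \<le> i \<and> i \<le> Suc k"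
    have nn: "0 \<le> coeff (qX * N') i" "0 \<le> coeff D' i" using F unfolding nonneg_def coeff_qX by auto
    show "0 < coeff (D' + qX * N') i"
    proof (cases "i \<le> degree D'")
      case True
      then have "0 < coeff D' i" using F unfolding pos_on_def by auto
      then show ?thesis using nn by simp
    next
      case False
      then have "i \<ge> 1" by auto
      have "k - (i - 1) \<le> degree D" using False F(17) i by linarith
      then have "0 < coeff D (k - (i - 1))" using F unfolding pos_on_def by auto
      then have "0 < coeff (qX * N') i" using rN'D[of "i - 1"] \<open>i \<ge> 1\<close> i
        by (simp add: coeff_qX)
      then show ?thesis using nn by simp
    qed
  qed
  show ?thesis unfolding Inv_def using 1 2 3 4 c0 deg pos I by auto
qed

lemma Inv_op2:
  assumes "Inv k N D N' D'"
  shows "Inv (Suc k) (qX * N) (D + qX * N) (qX * N' + D') D'"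
  using Inv_swap[OF Inv_op1[OF Inv_swap[OF assms]]] .

lemma prod_pos:
  assumes "nonneg p" "nonneg q" "pos_on p a b" "pos_on q c d" "a \<le> b" "c \<le> d"
    "a + c \<le> i" "i \<le> b + d"
  shows "0 < coeff (p * q) i"
proof -
  define j where "j = max a (i - d)"
  have j: "a \<le> j" "j \<le> b" "c \<le> i - j" "i - j \<le> d" "j \<le> i"
    using assms(5-8) unfolding j_def by auto
  have pj: "0 < coeff p j * coeff q (i - j)"
    using assms(3,4) j unfolding pos_on_def by auto
  have "coeff p j * coeff q (i - j) \<le> (\<Sum>l\<le>i. coeff p l * coeff q (i - l))"
    by (rule member_le_sum[where f="\<lambda>l. coeff p l * coeff q (i - l)"])
       (use j assms(1,2) in \<open>auto simp: nonneg_def\<close>)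
  then show ?thesis using pj by (simp add: coeff_mult)
qed

lemma nonneg_add: "nonneg p \<Longrightarrow> nonneg q \<Longrightarrow> nonneg (p + q)"
  by (simp add: nonneg_def)

lemma nonneg_mult: "nonneg p \<Longrightarrow> nonneg q \<Longrightarrow> nonneg (p * q)"
  unfolding nonneg_def coeff_mult by (auto intro!: sum_nonneg)

lemma nonneg_X: "nonneg p \<Longrightarrow> nonneg (qX * p)"
  by (simp add: nonneg_def coeff_qX)

lemma deg_eqI: "coeff P d \<noteq> 0 \<Longrightarrow> (\<And>i. i > d \<Longrightarrow> coeff P i = 0) \<Longrightarrow> degree P = d"
  by (metis le_antisym le_degree degree_le not_le)

lemma monic_bothI: "lead_coeff P = 1 \<Longrightarrow> coeff P 0 = 1 \<Longrightarrow> monic_both P"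
  unfolding monic_both_def by (simp add: Least_eq_0)

lemma positive_coeffsI: "(\<And>i. i \<le> degree P \<Longrightarrow> 0 < coeff P i) \<Longrightarrow> positive_coeffs P"
  unfolding positive_coeffs_def by auto

lemma coeff_hi: "degree P \<le> d \<Longrightarrow> i > d \<Longrightarrow> coeff P i = 0"
  by (simp add: coeff_eq_0)

lemma deg_X: "degree (qX * p) \<le> Suc (degree p)"
  by (metis degree_mult_le qX_def degree_pCons_eq_if One_nat_def add_Suc le_refl
        nat.simps(3) one_neq_zero degree_pCons_0 plus_1_eq_Suc pCons_eq_0_iff)

lemma coeff_qX0[simp]: "coeff qX 0 = 0" by (simp add: qX_def)

lemma A_props:
  assumes "Inv k N D N' D'"
  defines "A \<equiv> qX * N * N' + D * D'"
  shows "degree A = 2 * k + 1" "positive_coeffs A" "monic_both A"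
proof -
  note F = Inv_facts[OF assms(1)]
  have Aeq: "A = qX * (N * N') + D * D'" unfolding A_def by (simp add: mult.assoc)
  have nn: "nonneg (qX * (N * N'))" "nonneg (D * D')"
    using F by (auto intro: nonneg_X nonneg_mult)
  have dNN: "degree (N * N') \<le> 2 * k" using F degree_mult_le[of N N'] by simp
  have dDD: "degree (D * D') \<le> 2 * k" using F degree_mult_le[of D D'] by simp
  have top: "coeff A (2 * k + 1) = 1"
    using F coeff_mult_degree_sum[of N N'] coeff_hi[OF dDD, of "2*k+1"]
    unfolding Aeq by (simp add: coeff_qX mult_2)
  have hi: "coeff A i = 0" if "i > 2 * k + 1" for i
    using coeff_hi[OF dNN, of "i - 1"] coeff_hi[OF dDD, of i] that unfolding Aeq
    by (simp add: coeff_qX)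
  show dA: "degree A = 2 * k + 1" using top hi by (intro deg_eqI) auto
  have c0: "coeff A 0 = 1" unfolding Aeq using F by (simp add: coeff_qX coeff_mult_0)
  show "monic_both A" using top c0 dA by (intro monic_bothI) auto
  show "positive_coeffs A"
  proof (rule positive_coeffsI)
    fix i assume "i \<le> degree A"
    then have i: "i \<le> 2 * k + 1" using dA by simp
    show "0 < coeff A i"
    proof (cases "i \<le> degree D + degree D'")
      case True
      have "0 < coeff (D * D') i"
        by (rule prod_pos[of D D' 0 "degree D" 0 "degree D'"]) (use F True in auto)
      moreover have "0 \<le> coeff (qX * (N * N')) i" "0 \<le> coeff (D * D') i" using nn nonneg_def by blast+
      ultimately show ?thesis unfolding Aeq coeff_add by linarith
    next
      case False
      have "0 < coeff (N * N') (i - 1)"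
        by (rule prod_pos[of N N' "k - degree D'" k "k - degree D" k]) (use F False i in auto)
      then have "0 < coeff (qX * (N * N')) i" using False by (simp add: coeff_qX)
      moreover have "0 \<le> coeff (qX * (N * N')) i" "0 \<le> coeff (D * D') i" using nn nonneg_def by blast+
      ultimately show ?thesis unfolding Aeq coeff_add by linarith
    qed
  qed
qed

lemma C_props:
  assumes "Inv k N D N' D'"
  defines "C \<equiv> qX * N ^ 2 + D ^ 2"
  shows "positive_coeffs C" "monic_both C"
proof -
  note F = Inv_facts[OF assms(1)]
  have Ceq: "C = qX * (N * N) + D * D" unfolding C_def by (simp add: power2_eq_square)
  have nn: "nonneg (qX * (N * N))" "nonneg (D * D)"
    using F by (auto intro: nonneg_X nonneg_mult)
  have dNN: "degree (N * N) \<le> 2 * k" using F degree_mult_le[of N N] by simp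
  have dDD: "degree (D * D) \<le> 2 * k" using F degree_mult_le[of D D] by simp
  have top: "coeff C (2 * k + 1) = 1"
    using F coeff_mult_degree_sum[of N N] coeff_hi[OF dDD, of "2*k+1"]
    unfolding Ceq by (simp add: coeff_qX mult_2)
  have hi: "coeff C i = 0" if "i > 2 * k + 1" for i
    using coeff_hi[OF dNN, of "i - 1"] coeff_hi[OF dDD, of i] that unfolding Ceq
    by (simp add: coeff_qX)
  have dC: "degree C = 2 * k + 1" using top hi by (intro deg_eqI) auto
  have c0: "coeff C 0 = 1" unfolding Ceq using F by (simp add: coeff_qX coeff_mult_0)
  show "monic_both C" using top c0 dC by (intro monic_bothI) auto
  show "positive_coeffs C"
  proof (rule positive_coeffsI)
    fix i assume "i \<le> degree C"
    then have i: "i \<le> 2 * k + 1" using dC by simp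
    show "0 < coeff C i"
    proof (cases "i \<le> degree D + degree D")
      case True
      have "0 < coeff (D * D) i"
        by (rule prod_pos[of D D 0 "degree D" 0 "degree D"]) (use F True in auto)
      moreover have "0 \<le> coeff (qX * (N * N)) i" "0 \<le> coeff (D * D) i" using nn nonneg_def by blast+
      ultimately show ?thesis unfolding Ceq coeff_add by linarith
    next
      case False
      have "0 < coeff (N * N) (i - 1)"
        by (rule prod_pos[of N N "k - degree D'" k "k - degree D'" k]) (use F False i in auto)
      then have "0 < coeff (qX * (N * N)) i" using False by (simp add: coeff_qX)
      moreover have "0 \<le> coeff (qX * (N * N)) i" "0 \<le> coeff (D * D) i" using nn nonneg_def by blast+
      ultimately show ?thesis unfolding Ceq coeff_add by linarith
    qed
  qed
qed

lemma B_props: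
  assumes "Inv k N D N' D'"
  defines "B \<equiv> (qX * N + D) * (D' + qX * N') - D * (qX * N')"
  shows "degree B = 2 * k + 2" "positive_coeffs B" "monic_both B"
proof -
  note F = Inv_facts[OF assms(1)]
  have Beq: "B = qX * (N * D') + qX * (qX * (N * N')) + D * D'"
    unfolding B_def by (simp add: algebra_simps)
  have nn: "nonneg (qX * (N * D'))" "nonneg (qX * (qX * (N * N')))" "nonneg (D * D')"
    using F by (auto intro: nonneg_X nonneg_mult)
  have dNN: "degree (N * N') \<le> 2 * k" using F degree_mult_le[of N N'] by simp
  have dND: "degree (N * D') \<le> 2 * k" using F degree_mult_le[of N D'] by simp
  have dDD: "degree (D * D') \<le> 2 * k" using F degree_mult_le[of D D'] by simp
  have top: "coeff B (2 * k + 2) = 1"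
    using F coeff_mult_degree_sum[of N N'] coeff_hi[OF dDD, of "2*k+2"] coeff_hi[OF dND, of "2*k+1"]
    unfolding Beq by (simp add: coeff_qX mult_2)
  have hi: "coeff B i = 0" if "i > 2 * k + 2" for i
    using coeff_hi[OF dNN, of "i - Suc (Suc 0)"] coeff_hi[OF dND, of "i - 1"] coeff_hi[OF dDD, of i] that
    unfolding Beq by (simp add: coeff_qX)
  show dB: "degree B = 2 * k + 2" using top hi by (intro deg_eqI) auto
  have c0: "coeff B 0 = 1" unfolding Beq using F by (simp add: coeff_qX coeff_mult_0)
  show "monic_both B" using top c0 dB by (intro monic_bothI) auto
  show "positive_coeffs B"
  proof (rule positive_coeffsI)
    fix i assume "i \<le> degree B"
    then have i: "i \<le> 2 * k + 2" using dB by simp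
    have nn': "0 \<le> coeff (qX * (N * D')) i" "0 \<le> coeff (qX * (qX * (N * N'))) i" "0 \<le> coeff (D * D') i"
      using nn unfolding nonneg_def by auto
    show "0 < coeff B i"
    proof (cases "i \<le> degree D + degree D'")
      case True
      have "0 < coeff (D * D') i"
        by (rule prod_pos[of D D' 0 "degree D" 0 "degree D'"]) (use F True in auto)
      then show ?thesis using nn' unfolding Beq coeff_add by linarith
    next
      case False
      show ?thesis
      proof (cases "i \<le> 1 + k + degree D'")
        case True
        have "0 < coeff (N * D') (i - 1)"
          by (rule prod_pos[of N D' "k - degree D'" k 0 "degree D'"]) (use F False True in auto)
        then have "0 < coeff (qX * (N * D')) i" using False by (simp add: coeff_qX)
        then show ?thesis using nn' unfolding Beq coeff_add by linarith
      next
        case False2: False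
        have "0 < coeff (N * N') (i - 1 - 1)"
          by (rule prod_pos[of N N' "k - degree D'" k "k - degree D" k]) (use F False False2 i in auto)
        then have "0 < coeff (qX * (qX * (N * N'))) i" using False2 by (simp add: coeff_qX)
        then show ?thesis using nn' unfolding Beq coeff_add by linarith
      qed
    qed
  qed
qed

lemma ev_qX[simp]: "ev qX z = z" by (simp add: qX_def)

lemma A_selfrec:
  assumes "Inv k N D N' D'" "degree (qX * N * N' + D * D') = 2 * k + 1"
  shows "self_reciprocal (qX * N * N' + D * D')"
  unfolding self_reciprocal_def ev_def[symmetric]
proof (intro allI impI)
  fix z :: complex assume z: "z \<noteq> 0"
  note I = assms(1)[unfolded Inv_def]
  have iz: "inverse z \<noteq> 0" using z by simp
  have e1: "ev N (inverse z) = inverse z ^ k * ev D' z"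
    using rel_ev[of k N D' "inverse z"] I iz by simp
  have e2: "ev N' (inverse z) = inverse z ^ k * ev D z"
    using rel_ev[of k N' D "inverse z"] I iz by simp
  have e3: "ev D (inverse z) = inverse z ^ k * ev N' z"
    using rel_ev[of k D N' "inverse z"] I iz by simp
  have e4: "ev D' (inverse z) = inverse z ^ k * ev N z"
    using rel_ev[of k D' N "inverse z"] I iz by simp
  show "z ^ degree (qX * N * N' + D * D') * ev (qX * N * N' + D * D') (inverse z) = ev (qX * N * N' + D * D') z"
    unfolding assms(2) using z
    apply (simp only: ev_add ev_mult ev_qX ev_diff e1 e2 e3 e4)
    apply (simp add: power_add field_simps mult_2 power_mult_distrib flip: power_add)
    apply (simp add: mult_2_right[symmetric] power_add[symmetric] algebra_simps)
    done
qed

lemma B_selfrec: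
  assumes "Inv k N D N' D'" "degree (N * D' - D * N') = 2 * k"
  shows "self_reciprocal (N * D' - D * N')"
  unfolding self_reciprocal_def ev_def[symmetric]
proof (intro allI impI)
  fix z :: complex assume z: "z \<noteq> 0"
  note I = assms(1)[unfolded Inv_def]
  have iz: "inverse z \<noteq> 0" using z by simp
  have e1: "ev N (inverse z) = inverse z ^ k * ev D' z"
    using rel_ev[of k N D' "inverse z"] I iz by simp
  have e2: "ev N' (inverse z) = inverse z ^ k * ev D z"
    using rel_ev[of k N' D "inverse z"] I iz by simp
  have e3: "ev D (inverse z) = inverse z ^ k * ev N' z"
    using rel_ev[of k D N' "inverse z"] I iz by simp
  have e4: "ev D' (inverse z) = inverse z ^ k * ev N z"
    using rel_ev[of k D' N "inverse z"] I iz by simp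
  show "z ^ degree (N * D' - D * N') * ev (N * D' - D * N') (inverse z) = ev (N * D' - D * N') z"
    unfolding assms(2) using z
    apply (simp only: ev_add ev_mult ev_qX ev_diff e1 e2 e3 e4)
    apply (simp add: power_add field_simps mult_2 power_mult_distrib flip: power_add)
    apply (simp add: mult_2_right[symmetric] power_add[symmetric] algebra_simps)
    done
qed

function qp :: "nat \<Rightarrow> nat \<Rightarrow> int poly \<times> int poly" where
  "qp m n = (if m = 0 \<or> n = 0 \<or> m = n then (1, 1)
     else if n < m then (qX * fst (qp (m - n) n) + snd (qp (m - n) n), snd (qp (m - n) n))
     else (qX * fst (qp m (n - m)), snd (qp m (n - m)) + qX * fst (qp m (n - m))))"
  by auto
termination by (relation "measure (\<lambda>(m, n). m + n)") auto

declare qp.simps[simp del]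

lemma qp_same: "qp m m = (1, 1)" by (simp add: qp.simps)

lemma qp_op1: "0 < m \<Longrightarrow> 0 < n \<Longrightarrow>
   qp (m + n) n = (qX * fst (qp m n) + snd (qp m n), snd (qp m n))"
  by (subst qp.simps) simp

lemma qp_op2: "0 < m \<Longrightarrow> 0 < n \<Longrightarrow>
   qp m (m + n) = (qX * fst (qp m n), snd (qp m n) + qX * fst (qp m n))"
  by (subst qp.simps) simp

lemma qp_Inv: "0 < m \<Longrightarrow> 0 < n \<Longrightarrow>
   \<exists>k. Inv k (fst (qp m n)) (snd (qp m n)) (fst (qp n m)) (snd (qp n m))"
proof (induction m n rule: qp.induct)
  case (1 m n)
  show ?case
  proof (cases "m = n")
    case True
    have "Inv 0 1 1 1 1" unfolding Inv_def rel_def pos_on_def by auto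
    then show ?thesis using True by (auto simp: qp_same)
  next
    case False
    show ?thesis
    proof (cases "n < m")
      case True
      then obtain k where k: "Inv k (fst (qp (m - n) n)) (snd (qp (m - n) n)) (fst (qp n (m - n))) (snd (qp n (m - n)))"
        using 1 False by auto
      have e1: "qp m n = (qX * fst (qp (m - n) n) + snd (qp (m - n) n), snd (qp (m - n) n))"
        using qp_op1[of "m - n" n] True \<open>0 < m\<close> \<open>0 < n\<close> by simp
      have e2: "qp n m = (qX * fst (qp n (m - n)), snd (qp n (m - n)) + qX * fst (qp n (m - n)))"
        using qp_op2[of n "m - n"] True \<open>0 < m\<close> \<open>0 < n\<close> by simp
      show ?thesis
        using Inv_op1[OF k] unfolding e1 e2 fst_conv snd_conv by blast
    next
      case F2: False
      then have lt: "m < n" using False by simp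
      then obtain k where k: "Inv k (fst (qp m (n - m))) (snd (qp m (n - m))) (fst (qp (n - m) m)) (snd (qp (n - m) m))"
        using 1 False by auto
      have e1: "qp m n = (qX * fst (qp m (n - m)), snd (qp m (n - m)) + qX * fst (qp m (n - m)))"
        using qp_op2[of m "n - m"] lt \<open>0 < m\<close> \<open>0 < n\<close> by simp
      have e2: "qp n m = (qX * fst (qp (n - m) m) + snd (qp (n - m) m), snd (qp (n - m) m))"
        using qp_op1[of "n - m" m] lt \<open>0 < m\<close> \<open>0 < n\<close> by simp
      show ?thesis
        using Inv_op2[OF k] unfolding e1 e2 fst_conv snd_conv by blast
    qed
  qed
qed

lemma cop1: "coprime (m::nat) n \<Longrightarrow> coprime (m + n) n"
  by (metis coprime_iff_gcd_eq_1 gcd_add1)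
lemma cop2: "coprime (m::nat) n \<Longrightarrow> coprime m (m + n)"
  by (metis coprime_iff_gcd_eq_1 gcd_add2 add.commute)

lemma qof: "coprime m n \<Longrightarrow> 0 < n \<Longrightarrow> quotient_of (of_nat m / of_nat n :: rat) = (int m, int n)"
proof -
  assume c: "coprime m n" and n: "0 < n"
  have "(of_nat m / of_nat n :: rat) = Rat.Fract (int m) (int n)"
    by (simp add: Fract_of_int_quotient)
  then show ?thesis using c n by (simp add: quotient_of_Fract)
qed

lemma pos_rep:
  assumes "0 < (x::rat)"
  obtains m n where "0 < m" "0 < n" "coprime m n" "x = of_nat m / of_nat n"
proof -
  obtain a b where q: "quotient_of x = (a, b)" by (cases "quotient_of x")
  have b: "0 < b" using quotient_of_denom_pos[OF q] .
  have c: "coprime a b" using quotient_of_coprime[OF q] .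
  have x: "x = of_int a / of_int b" using quotient_of_div[OF q] .
  have a: "0 < a" using assms b x by (simp add: zero_less_divide_iff)
  show ?thesis
  proof (rule that[of "nat a" "nat b"])
    show "0 < nat a" "0 < nat b" using a b by auto
    show "coprime (nat a) (nat b)" using c a b
      by (metis coprime_int_iff int_nat_eq less_le_not_le)
    show "x = of_nat (nat a) / of_nat (nat b)" using x a b by simp
  qed
qed

definition Fq :: "rat \<Rightarrow> qfun" where
  "Fq x = (case quotient_of x of (a, b) \<Rightarrow> Fract (fst (qp (nat a) (nat b))) (snd (qp (nat a) (nat b))))"

lemma Fq_eq: "coprime m n \<Longrightarrow> 0 < n \<Longrightarrow>
   Fq (of_nat m / of_nat n) = Fract (fst (qp m n)) (snd (qp m n))"
  by (simp add: Fq_def qof)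

lemma qp_nz: "0 < m \<Longrightarrow> 0 < n \<Longrightarrow> fst (qp m n) \<noteq> 0 \<and> snd (qp m n) \<noteq> 0"
proof -
  assume "0 < m" "0 < n"
  then obtain k where "Inv k (fst (qp m n)) (snd (qp m n)) (fst (qp n m)) (snd (qp n m))"
    using qp_Inv by blast
  from Inv_facts[OF this] show ?thesis by auto
qed

lemma qvar_eq: "qvar = Fract qX 1" by (simp add: qvar_def qX_def)

lemma qX_nz: "qX \<noteq> 0" by (simp add: qX_def)

lemma Fq_shift:
  assumes "0 < m" "0 < n" "coprime m n"
  shows "Fq (of_nat m / of_nat n + 1) = qvar * Fq (of_nat m / of_nat n) + 1"
proof -
  have e: "(of_nat m / of_nat n + 1 :: rat) = of_nat (m + n) / of_nat n" using assms by (simp add: field_simps)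
  have nz: "snd (qp m n) \<noteq> 0" using qp_nz assms by blast
  show ?thesis unfolding e Fq_eq[OF cop1[OF assms(3)] assms(2)] Fq_eq[OF assms(3) assms(2)]
    qp_op1[OF assms(1,2)] qvar_eq using nz
    by (simp add: One_fract_def eq_fract algebra_simps)
qed

lemma Fq_op2:
  assumes "0 < m" "0 < n" "coprime m n"
  shows "Fq (of_nat m / of_nat (m + n)) = qvar * Fq (of_nat m / of_nat n) / (1 + qvar * Fq (of_nat m / of_nat n))"
    "1 + qvar * Fq (of_nat m / of_nat n) \<noteq> 0" "Fq (of_nat m / of_nat n) \<noteq> 0"
proof -
  have nz: "snd (qp m n) \<noteq> 0" "fst (qp m n) \<noteq> 0" using qp_nz assms by blast+
  have nz2: "snd (qp m (m + n)) \<noteq> 0" using qp_nz assms by simp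
  then have nz3: "snd (qp m n) + qX * fst (qp m n) \<noteq> 0" unfolding qp_op2[OF assms(1,2)] by simp
  have np: "0 < m + n" using assms by simp
  show "Fq (of_nat m / of_nat n) \<noteq> 0" unfolding Fq_eq[OF assms(3) assms(2)] using nz
    by (simp add: eq_fract Zero_fract_def)
  show "1 + qvar * Fq (of_nat m / of_nat n) \<noteq> 0" unfolding Fq_eq[OF assms(3) assms(2)] qvar_eq
    using nz nz3 by (simp add: One_fract_def eq_fract Zero_fract_def algebra_simps)
  show "Fq (of_nat m / of_nat (m + n)) = qvar * Fq (of_nat m / of_nat n) / (1 + qvar * Fq (of_nat m / of_nat n))"
    unfolding Fq_eq[OF cop2[OF assms(3)] np] Fq_eq[OF assms(3) assms(2)]
    qp_op2[OF assms(1,2)] qvar_eq using nz nz3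
    apply (simp add: One_fract_def)
    apply (subst eq_fract(1))
      apply (simp_all add: algebra_simps)
    apply (subgoal_tac "snd (qp m n) * snd (qp m n) + qX * (fst (qp m n) * snd (qp m n)) = snd (qp m n) * (snd (qp m n) + qX * fst (qp m n))")
     apply simp
    apply (simp add: algebra_simps)
    done
qed

lemma Fq_one: "Fq 1 = 1"
proof -
  have "Fq (of_nat 1 / of_nat 1) = 1" by (subst Fq_eq) (auto simp: qp_same One_fract_def)
  then show ?thesis by simp
qed

lemma qvar_nz: "qvar \<noteq> 0"
  by (simp add: qvar_eq qX_nz eq_fract Zero_fract_def)

lemma P1: "0 < x \<Longrightarrow> Fq (x + 1) = qvar * Fq x + 1"
  by (metis pos_rep Fq_shift)

lemma P2:
  assumes "0 < x"
  shows "Fq (x / (1 + x)) = qvar * Fq x / (1 + qvar * Fq x)" "1 + qvar * Fq x \<noteq> 0" "Fq x \<noteq> 0"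
proof -
  obtain m n where mn: "0 < m" "0 < n" "coprime m n" "x = of_nat m / of_nat n"
    using pos_rep[OF assms] by blast
  have e: "x / (1 + x) = of_nat m / of_nat (m + n)" using mn(2) unfolding mn(4) by (simp add: field_simps)
  show "Fq (x / (1 + x)) = qvar * Fq x / (1 + qvar * Fq x)" "1 + qvar * Fq x \<noteq> 0" "Fq x \<noteq> 0"
    unfolding e using Fq_op2[OF mn(1-3)] mn(4) by auto
qed

definition f0 :: "rat option \<Rightarrow> qfun option" where
  "f0 v = (case v of None \<Rightarrow> None | Some x \<Rightarrow>
     Some (if 0 < x then Fq x else if x = 0 then 0 else - 1 / (qvar * Fq (- 1 / x))))"

lemma f0_shift: "f0 (shift1 v) = qshift1 (f0 v)"
proof (cases v)
  case None then show ?thesis by (simp add: f0_def shift1_def qshift1_def)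
next
  case (Some x)
  have qn: "qvar \<noteq> 0" by (rule qvar_nz)
  consider "0 < x" | "x = 0" | "x = -1" | "-1 < x \<and> x < 0" | "x < -1" by linarith
  then show ?thesis
  proof cases
    case 1 then show ?thesis using P1[OF 1] by (simp add: Some f0_def shift1_def qshift1_def)
  next
    case 2 then show ?thesis using Fq_one by (simp add: Some f0_def shift1_def qshift1_def)
  next
    case 3 then show ?thesis using Fq_one qn by (simp add: Some f0_def shift1_def qshift1_def)
  next
    case 4
    define y where "y = - x"
    have y: "0 < y" "y < 1" using 4 y_def by auto
    define u where "u = 1 / y - 1"
    have u: "0 < u" using y unfolding u_def by (simp add: field_simps)
    have e1: "1 / y = u + 1" unfolding u_def by simp
    have e2: "x + 1 = u / (1 + u)" unfolding u_def y_def using 4 by (simp add: field_simps)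
    have e3: "- 1 / x = u + 1" using e1 unfolding y_def by (simp add: field_simps)
    have F1: "Fq (u + 1) = qvar * Fq u + 1" using P1[OF u] .
    note F2 = P2[OF u]
    have pos: "0 < x + 1" using 4 by simp
    have L: "Fq (x + 1) = qvar * Fq u / (1 + qvar * Fq u)" using e2 F2(1) by simp
    have R: "Fq (- 1 / x) = qvar * Fq u + 1" using e3 F1 by simp
    have a: "f0 (shift1 v) = Some (Fq (x + 1))" using pos Some by (simp add: f0_def shift1_def)
    have b: "qshift1 (f0 v) = Some (qvar * (- 1 / (qvar * Fq (- 1 / x))) + 1)"
      using 4 Some unfolding f0_def qshift1_def by simp
    have nz: "qvar + qvar * (qvar * Fq u) \<noteq> 0"
    proof -
      have "qvar + qvar * (qvar * Fq u) = qvar * (1 + qvar * Fq u)" by (simp add: algebra_simps)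
      then show ?thesis using qn F2(2) by simp
    qed
    show ?thesis unfolding a b L R using qn F2(2) nz by (simp add: field_simps)
  next
    case 5
    define w where "w = - 1 / (x + 1)"
    have w: "0 < w" using 5 unfolding w_def by (simp add: field_simps)
    have e: "- 1 / x = w / (1 + w)" using 5 unfolding w_def by (simp add: field_simps)
    note F2 = P2[OF w]
    have L: "Fq (- 1 / x) = qvar * Fq w / (1 + qvar * Fq w)" using e F2(1) by simp
    have a: "f0 (shift1 v) = Some (- 1 / (qvar * Fq w))" using 5 Some
      unfolding f0_def shift1_def w_def by simp
    have b: "qshift1 (f0 v) = Some (qvar * (- 1 / (qvar * Fq (- 1 / x))) + 1)"
      using 5 Some unfolding f0_def qshift1_def by simp
    show ?thesis unfolding a b L using qn F2(2,3) by (simp add: field_simps)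
  qed
qed

lemma f0_neginv: "f0 (neginv v) = qneginv (f0 v)"
proof (cases v)
  case None then show ?thesis by (simp add: f0_def neginv_def qneginv_def)
next
  case (Some x)
  have qn: "qvar \<noteq> 0" by (rule qvar_nz)
  consider "0 < x" | "x = 0" | "x < 0" by linarith
  then show ?thesis
  proof cases
    case 1
    have "Fq x \<noteq> 0" using P2(3)[OF 1] .
    then show ?thesis using 1 by (simp add: Some f0_def neginv_def qneginv_def)
  next
    case 2 then show ?thesis by (simp add: Some f0_def neginv_def qneginv_def)
  next
    case 3
    have p: "0 < - 1 / x" using 3 by (simp add: field_simps)
    have "Fq (- 1 / x) \<noteq> 0" using P2(3)[OF p] .
    then show ?thesis using 3 p qn by (simp add: Some f0_def neginv_def qneginv_def)
  qed
qed

lemma f0_is: "is_qdeformation f0"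
  unfolding is_qdeformation_def using f0_shift f0_neginv by (simp add: f0_def)

lemma uniq_pos:
  assumes f: "is_qdeformation f" and g: "is_qdeformation g"
  shows "0 < m \<Longrightarrow> 0 < n \<Longrightarrow> f (Some (of_nat m / of_nat n)) = g (Some (of_nat m / of_nat n))"
proof (induction "m + n" arbitrary: m n rule: less_induct)
  case less
  note fs = f[unfolded is_qdeformation_def] and gs = g[unfolded is_qdeformation_def]
  consider "m = n" | "n < m" | "m < n" by linarith
  then show ?case
  proof cases
    case 1
    have "Some (of_nat m / of_nat n :: rat) = shift1 (Some 0)" using 1 less.prems by (simp add: shift1_def)
    then show ?thesis using fs gs by metis
  next
    case 2
    have "Some (of_nat m / of_nat n :: rat) = shift1 (Some (of_nat (m - n) / of_nat n))"
      using 2 less.prems by (simp add: shift1_def of_nat_diff field_simps)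
    moreover have "f (Some (of_nat (m - n) / of_nat n)) = g (Some (of_nat (m - n) / of_nat n))"
      by (rule less.hyps) (use 2 less.prems in auto)
    ultimately show ?thesis using fs gs by metis
  next
    case 3
    have "Some (of_nat m / of_nat n :: rat) = shift1 (neginv (shift1 (Some (of_nat m / of_nat (n - m)))))"
      using 3 less.prems by (simp add: shift1_def neginv_def of_nat_diff field_simps)
    moreover have "f (Some (of_nat m / of_nat (n - m))) = g (Some (of_nat m / of_nat (n - m)))"
      by (rule less.hyps) (use 3 less.prems in auto)
    ultimately show ?thesis using fs gs by metis
  qed
qed

lemma uniq:
  assumes f: "is_qdeformation f" and g: "is_qdeformation g"
  shows "f = g"
proof
  fix v
  note fs = f[unfolded is_qdeformation_def] and gs = g[unfolded is_qdeformation_def]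
  have pos: "f (Some x) = g (Some x)" if "0 < x" for x
    using pos_rep[OF that] uniq_pos[OF f g] by metis
  show "f v = g v"
  proof (cases v)
    case None
    have "v = neginv (Some 0)" using None by (simp add: neginv_def)
    then show ?thesis using fs gs by metis
  next
    case (Some x)
    consider "0 < x" | "x = 0" | "x < 0" by linarith
    then show ?thesis
    proof cases
      case 1 then show ?thesis using pos Some by simp
    next
      case 2 then show ?thesis using fs gs Some by simp
    next
      case 3
      have p: "0 < - 1 / x" using 3 by (simp add: field_simps)
      have "v = neginv (Some (- 1 / x))" using 3 Some by (simp add: neginv_def)
      then show ?thesis using fs gs pos[OF p] by metis
    qed
  qed
qed

lemma qdeform_eq: "qdeform = f0"
  unfolding qdeform_def using f0_is uniq by (intro the_equality) auto

lemma prime_qX: "prime_elem qX"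
  unfolding qX_def by (rule prime_elem_linear_poly) auto

lemma coprime_qX: "coeff D 0 \<noteq> 0 \<Longrightarrow> coprime qX D"
  by (rule prime_elem_imp_coprime[OF prime_qX])
     (simp add: qX_def dvd_iff_poly_eq_0 poly_0_coeff_0)

lemma cop_op1:
  assumes "coprime N D" "coeff D 0 \<noteq> 0"
  shows "coprime (qX * N + D) D"
proof (rule coprimeI)
  fix d assume d1: "d dvd qX * N + D" and d2: "d dvd D"
  have "d dvd qX * N" using dvd_add_left_iff[OF d2, of "qX * N"] d1 by simp
  moreover have "coprime (qX * N) D" using assms coprime_qX by simp
  ultimately show "is_unit d" using d2 coprime_common_divisor by blast
qed

lemma cop_op2:
  assumes "coprime N D" "coeff D 0 \<noteq> 0"
  shows "coprime (qX * N) (D + qX * N)"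
proof (rule coprimeI)
  fix d assume d1: "d dvd qX * N" and d2: "d dvd D + qX * N"
  have "d dvd D" using dvd_add_left_iff[OF d1, of D] d2 by simp
  moreover have "coprime (qX * N) D" using assms coprime_qX by simp
  ultimately show "is_unit d" using d1 coprime_common_divisor by blast
qed

lemma qp_D0: "0 < m \<Longrightarrow> 0 < n \<Longrightarrow> coeff (snd (qp m n)) 0 = 1"
proof -
  assume "0 < m" "0 < n"
  then obtain k where "Inv k (fst (qp m n)) (snd (qp m n)) (fst (qp n m)) (snd (qp n m))"
    using qp_Inv by blast
  from Inv_facts(15)[OF this] show ?thesis .
qed

lemma qp_coprime: "0 < m \<Longrightarrow> 0 < n \<Longrightarrow> coprime (fst (qp m n)) (snd (qp m n))"
proof (induction m n rule: qp.induct)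
  case (1 m n)
  show ?case
  proof (cases "m = n")
    case True then show ?thesis by (simp add: qp_same)
  next
    case False
    show ?thesis
    proof (cases "n < m")
      case True
      have c: "coprime (fst (qp (m - n) n)) (snd (qp (m - n) n))" using 1 False True by auto
      have e1: "qp m n = (qX * fst (qp (m - n) n) + snd (qp (m - n) n), snd (qp (m - n) n))"
        using qp_op1[of "m - n" n] True \<open>0 < m\<close> \<open>0 < n\<close> by simp
      show ?thesis unfolding e1 fst_conv snd_conv
        by (rule cop_op1[OF c]) (use qp_D0[of "m - n" n] True \<open>0 < n\<close> in auto)
    next
      case F2: False
      then have lt: "m < n" using False by simp
      have c: "coprime (fst (qp m (n - m))) (snd (qp m (n - m)))" using 1 False F2 lt by auto
      have e1: "qp m n = (qX * fst (qp m (n - m)), snd (qp m (n - m)) + qX * fst (qp m (n - m)))"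
        using qp_op2[of m "n - m"] lt \<open>0 < m\<close> \<open>0 < n\<close> by simp
      show ?thesis unfolding e1 fst_conv snd_conv
        by (rule cop_op2[OF c]) (use qp_D0[of m "n - m"] lt \<open>0 < m\<close> in auto)
    qed
  qed
qed

lemma assoc_eq:
  fixes p q :: "int poly"
  assumes "p dvd q" "q dvd p" "lead_coeff p > 0" "lead_coeff q > 0"
  shows "p = q"
proof -
  obtain u where u: "q = p * u" using assms(1) by blast
  obtain v where v: "p = q * v" using assms(2) by blast
  have p0: "p \<noteq> 0" using assms(3) by auto
  have pp: "p = (p * u) * v" by (subst u[symmetric]) (rule v)
  have "p * (u * v) = p * 1" using pp[symmetric] by (simp add: mult.assoc)
  then have uv: "u * v = 1" using p0 mult_left_cancel by blast
  have "is_unit u" by (rule dvdI[of _ _ v]) (simp add: uv)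
  then obtain c where c: "u = [:c:]" "c dvd 1" using is_unit_poly_iff by blast
  have "c = 1 \<or> c = -1" using c(2) by (auto simp: zdvd1_eq abs_if split: if_splits)
  moreover have "lead_coeff q = lead_coeff p * c" using u c by (simp add: lead_coeff_mult)
  ultimately have "c = 1" using assms(3,4) by (auto simp: mult_less_0_iff)
  then show ?thesis using u c by simp
qed

lemma rep_unique:
  fixes N D N0 D0 :: "int poly"
  assumes "coprime N D" "lead_coeff N > 0" "lead_coeff D > 0"
    "coprime N0 D0" "lead_coeff N0 > 0" "lead_coeff D0 > 0"
    "Fract N D = Fract N0 D0"
  shows "N = N0 \<and> D = D0"
proof -
  have D: "D \<noteq> 0" "D0 \<noteq> 0" using assms by auto
  have e: "N * D0 = N0 * D" using assms(7) eq_fract(1)[OF D] by simp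
  have "N dvd N0 * D" using e by (metis dvd_triv_left)
  then have 1: "N dvd N0" using assms(1) by (simp add: coprime_dvd_mult_left_iff)
  have "N0 dvd N * D0" using e by (metis dvd_triv_left)
  then have 2: "N0 dvd N" using assms(4) by (simp add: coprime_dvd_mult_left_iff)
  have "D dvd N * D0" using e by (metis dvd_triv_right)
  then have 3: "D dvd D0" using assms(1) by (metis coprime_commute coprime_dvd_mult_right_iff)
  have "D0 dvd N0 * D" using e by (metis dvd_triv_right)
  then have 4: "D0 dvd D" using assms(4) by (metis coprime_commute coprime_dvd_mult_right_iff)
  show ?thesis using assoc_eq[OF 1 2] assoc_eq[OF 3 4] assms by auto
qed

lemma qp_lead: "0 < m \<Longrightarrow> 0 < n \<Longrightarrow> lead_coeff (fst (qp m n)) > 0 \<and> lead_coeff (snd (qp m n)) > 0"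
proof -
  assume "0 < m" "0 < n"
  then obtain k where "Inv k (fst (qp m n)) (snd (qp m n)) (fst (qp n m)) (snd (qp n m))"
    using qp_Inv by blast
  from Inv_facts[OF this] show ?thesis unfolding pos_on_def by auto
qed

lemma qnumden_eq:
  assumes "coprime m n" "0 < m" "0 < n"
  shows "qnumden (of_nat m / of_nat n) = qp m n"
proof -
  obtain N0 D0 where q: "qp m n = (N0, D0)" by (cases "qp m n")
  have x: "0 < (of_nat m / of_nat n :: rat)" using assms by simp
  have P: "coprime N0 D0 \<and> lead_coeff N0 > 0 \<and> lead_coeff D0 > 0 \<and>
      qdeform (Some (of_nat m / of_nat n)) = Some (Fract N0 D0)"
    using qp_coprime[OF assms(2,3)] qp_lead[OF assms(2,3)] Fq_eq[OF assms(1,3)] x q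
    by (simp add: qdeform_eq f0_def)
  show ?thesis unfolding qnumden_def q
  proof (rule the_equality)
    show "case (N0, D0) of (N, D) \<Rightarrow> coprime N D \<and> lead_coeff N > 0 \<and> lead_coeff D > 0 \<and>
      qdeform (Some (of_nat m / of_nat n)) = Some (Fract N D)" using P by simp
  next
    fix p assume a: "case p of (N, D) \<Rightarrow> coprime N D \<and> lead_coeff N > 0 \<and> lead_coeff D > 0 \<and>
      qdeform (Some (of_nat m / of_nat n)) = Some (Fract N D)"
    obtain N D where p: "p = (N, D)" by (cases p)
    show "p = (N0, D0)" using rep_unique[of N D N0 D0] a P unfolding p by auto
  qed
qed

theorem proposition2:
  fixes m n :: nat
  assumes "coprime m n" and "1 \<le> n" and "n < m"
  defines "x \<equiv> (of_nat m / of_nat n :: rat)"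
  shows "self_reciprocal (qA x) \<and> self_reciprocal (qB x)
       \<and> monic_both (qA x) \<and> monic_both (qB x) \<and> monic_both (qC x)
       \<and> positive_coeffs (qA x) \<and> positive_coeffs (qB x) \<and> positive_coeffs (qC x)"
proof -
  have n0: "0 < n" and m0: "0 < m" using assms by auto
  have ix: "1 / x = of_nat n / of_nat m" unfolding x_def using n0 m0 by simp
  have q1: "qnumden x = qp m n" unfolding x_def by (rule qnumden_eq[OF assms(1) m0 n0])
  have q2: "qnumden (1 / x) = qp n m" unfolding ix
    by (rule qnumden_eq) (use assms(1) m0 n0 in \<open>auto simp: coprime_commute\<close>)
  define d where "d = m - n"
  have d0: "0 < d" using assms unfolding d_def by simp
  define N where "N = fst (qp d n)"
  define D where "D = snd (qp d n)"
  define N' where "N' = fst (qp n d)"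
  define D' where "D' = snd (qp n d)"
  obtain k where k: "Inv k N D N' D'" using qp_Inv[OF d0 n0] unfolding N_def D_def N'_def D'_def by blast
  have e1: "qp m n = (qX * N + D, D)"
    using qp_op1[OF d0 n0] assms(3) unfolding d_def N_def D_def by simp
  have e2: "qp n m = (qX * N', D' + qX * N')"
    using qp_op2[OF n0 d0] assms(3) unfolding d_def N'_def D'_def by simp
  have k1: "Inv (Suc k) (qX * N + D) D (qX * N') (D' + qX * N')" by (rule Inv_op1[OF k])
  have A: "qA x = qX * (qX * N + D) * (qX * N') + D * (D' + qX * N')"
    unfolding qA_def qN_def qD_def q1 q2 e1 e2 qX_def by simp
  have B: "qB x = (qX * N + D) * (D' + qX * N') - D * (qX * N')"
    unfolding qB_def qN_def qD_def q1 q2 e1 e2 by simp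
  have C: "qC x = qX * (qX * N + D) ^ 2 + D ^ 2"
    unfolding qC_def qN_def qD_def q1 e1 qX_def by simp
  note Ap = A_props[OF k1]
  note Bp = B_props[OF k]
  note Cp = C_props[OF k1]
  have sA: "self_reciprocal (qA x)" unfolding A by (rule A_selfrec[OF k1 Ap(1)])
  have dB: "degree ((qX * N + D) * (D' + qX * N') - D * (qX * N')) = 2 * Suc k"
    using Bp(1) by simp
  have sB: "self_reciprocal (qB x)" unfolding B by (rule B_selfrec[OF k1 dB])
  show ?thesis unfolding A B C using sA sB Ap Bp Cp unfolding A B by simp
qed

end
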